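(* Let $(V,E_1)$ and $(V,E_2)$ be finite graphs on the same vertex set $V$ and let $0\le\lambda<1$, $0\le\varepsilon<1$ be constants. Denote by $m_i(v)$ the degree of $v$ in $(V,E_i)$. Assume that $(V,E_1\cup E_2)$ is connected and that the second largest eigenvalue of the random walk on it is less than $\lambda$. If for every $v\in V$, $\frac{m_2(v)}{m_1(v)}\le\varepsilon<\frac{1-\lambda}{4}$, then $(V,E_1)$ is connected and the second largest eigenvalue of the random walk on it is less than $\lambda+4\varepsilon$.
   Context: The random walk on a finite graph $(V,E)$ is the operator $(A\phi)(v)=\frac1{m(v)}\sum_{u:\{u,v\}\in E}\phi(u)$, where $m(v)$ is the degree of $v$ (edges counted with multiplicity; in $(V,E_1\cup E_2)$ the degree is $m_1(v)+m_2(v)$); it is self-adjoint with respect to the inner product $\langle\phi,\psi\rangle=\sum_v m(v)\phi(v)\overline{\psi(v)}$, with eigenvalues in $[-1,1]$, the largest being $1$. *)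

theory Defs
  imports "Jordan_Normal_Form.Char_Poly" "HOL-Library.Multiset"
begin

text \<open>A finite multigraph on the vertex set V = {0..<n} is given by a symmetric
  edge-multiplicity function w, where w u v is the number of edges {u,v}
  (a loop {v,v} counts once towards the degree of v, so that the random walk
  operator is stochastic).  The union E1 \<union> E2 (with multiplicity)
  corresponds to w1 + w2.\<close>

definition multigraph :: "nat \<Rightarrow> (nat \<Rightarrow> nat \<Rightarrow> nat) \<Rightarrow> bool" where
  "multigraph n w \<longleftrightarrow> (\<forall>u v. w u v = w v u) \<and> (\<forall>u v. n \<le> u \<or> n \<le> v \<longrightarrow> w u v = 0)"

definition degree :: "nat \<Rightarrow> (nat \<Rightarrow> nat \<Rightarrow> nat) \<Rightarrow> nat \<Rightarrow> nat" where
  "degree n w v = (\<Sum>u<n. w v u)"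

definition adj_rel :: "nat \<Rightarrow> (nat \<Rightarrow> nat \<Rightarrow> nat) \<Rightarrow> (nat \<times> nat) set" where
  "adj_rel n w = {(u, v). u < n \<and> v < n \<and> 0 < w u v}"

definition graph_connected :: "nat \<Rightarrow> (nat \<Rightarrow> nat \<Rightarrow> nat) \<Rightarrow> bool" where
  "graph_connected n w \<longleftrightarrow> (\<forall>u<n. \<forall>v<n. (u, v) \<in> (adj_rel n w)\<^sup>*)"

definition walk_matrix :: "nat \<Rightarrow> (nat \<Rightarrow> nat \<Rightarrow> nat) \<Rightarrow> real mat" where
  "walk_matrix n w = mat n n (\<lambda>(i, j). real (w i j) / real (degree n w i))"

text \<open>Eigenvalues of the random walk, counted with multiplicity, in decreasing order.
  (The operator is self-adjoint for the degree-weighted inner product, so all roots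
  of the characteristic polynomial are real.)\<close>
definition walk_eigenvalues :: "nat \<Rightarrow> (nat \<Rightarrow> nat \<Rightarrow> nat) \<Rightarrow> real list" where
  "walk_eigenvalues n w = rev (sorted_list_of_multiset (proots (char_poly (walk_matrix n w))))"

definition second_eigenvalue :: "nat \<Rightarrow> (nat \<Rightarrow> nat \<Rightarrow> nat) \<Rightarrow> real" where
  "second_eigenvalue n w = walk_eigenvalues n w ! 1"

end

theory Submission
  imports Defs "Jordan_Normal_Form.Schur_Decomposition"
begin


lemma sym_eig_real:
  fixes S :: "real mat" and a :: complex
  assumes S: "S \<in> carrier_mat n n"
    and sym: "\<And>i j. i < n \<Longrightarrow> j < n \<Longrightarrow> S $$ (i,j) = S $$ (j,i)"
    and ev: "eigenvalue (map_mat complex_of_real S) a"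
  shows "Im a = 0"
proof -
  let ?C = "map_mat complex_of_real S"
  from ev obtain v where v: "v \<in> carrier_vec n" "v \<noteq> 0\<^sub>v n" "?C *\<^sub>v v = a \<cdot>\<^sub>v v"
    unfolding eigenvalue_def eigenvector_def using S by auto
  have eq: "\<And>i. i < n \<Longrightarrow> (\<Sum>j<n. of_real (S $$ (i,j)) * v $ j) = a * v $ i"
  proof -
    fix i assume i: "i < n"
    have "(?C *\<^sub>v v) $ i = (a \<cdot>\<^sub>v v) $ i" using v(3) by simp
    thus "(\<Sum>j<n. of_real (S $$ (i,j)) * v $ j) = a * v $ i"
      using i S v(1) by (auto simp: mult_mat_vec_def scalar_prod_def lessThan_atLeast0 intro: sum.cong)
  qed
  define L where "L = (\<Sum>i<n. cnj (v $ i) * (\<Sum>j<n. of_real (S $$ (i,j)) * v $ j))"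
  define N where "N = (\<Sum>i<n. (cmod (v $ i))^2)"
  have L1: "L = a * of_real N"
  proof -
    have "L = (\<Sum>i<n. cnj (v $ i) * (a * v $ i))" unfolding L_def using eq by simp
    also have "\<dots> = a * (\<Sum>i<n. cnj (v $ i) * v $ i)" by (simp add: sum_distrib_left algebra_simps)
    also have "(\<Sum>i<n. cnj (v $ i) * v $ i) = of_real N" unfolding N_def
      unfolding of_real_sum by (intro sum.cong refl, metis complex_norm_square mult.commute)
    finally show ?thesis .
  qed
  have L2: "cnj L = L"
  proof -
    have "cnj L = (\<Sum>i<n. \<Sum>j<n. v $ i * of_real (S $$ (i,j)) * cnj (v $ j))"
      unfolding L_def by (simp add: sum_distrib_left algebra_simps)
    also have "\<dots> = (\<Sum>j<n. \<Sum>i<n. v $ i * of_real (S $$ (i,j)) * cnj (v $ j))"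
      by (rule sum.swap)
    also have "\<dots> = L" unfolding L_def sum_distrib_left
      by (intro sum.cong refl, auto simp: sym algebra_simps)
    finally show ?thesis .
  qed
  have Npos: "N > 0"
  proof -
    from v(1,2) obtain i where i: "i < n" "v $ i \<noteq> 0" by (metis eq_vecI carrier_vecD index_zero_vec)
    have "(cmod (v $ i))^2 > 0" using i by simp
    moreover have "(cmod (v $ i))^2 \<le> N" unfolding N_def
      by (rule member_le_sum, insert i, auto)
    ultimately show ?thesis by linarith
  qed
  from L2 have "Im L = 0" by (metis cnj.simps(2) complex.expand neg_equal_zero cnj.simps(1))
  with L1 have "Im a * N = 0" by simp
  with Npos show ?thesis by simp
qed

lemma sym_real_split:
  fixes S :: "real mat"
  assumes S: "S \<in> carrier_mat n n"
    and sym: "\<And>i j. i < n \<Longrightarrow> j < n \<Longrightarrow> S $$ (i,j) = S $$ (j,i)"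
  shows "\<exists>es. char_poly S = (\<Prod>e\<leftarrow>es. [:-e, 1:]) \<and> length es = n"
proof -
  let ?C = "map_mat complex_of_real S"
  have C: "?C \<in> carrier_mat n n" using S by simp
  from char_poly_factorized[OF C] obtain as where
    cp: "char_poly ?C = (\<Prod>a\<leftarrow>as. [:- a, 1:])" and len: "length as = n" by blast
  have re: "Im a = 0" if a: "a \<in> set as" for a
  proof -
    have "poly (char_poly ?C) a = 0" unfolding cp using a
      by (induct as, auto)
    hence "eigenvalue ?C a" using eigenvalue_root_char_poly[OF C] by simp
    thus ?thesis using sym_eig_real[of S n a] S sym by blast
  qed
  interpret m: map_poly_inj_comm_ring_hom complex_of_real ..
  define es where "es = map Re as"
  have "map_poly complex_of_real (\<Prod>e\<leftarrow>es. [:-e, 1:]) = (\<Prod>a\<leftarrow>as. [:- a, 1:])"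
    unfolding es_def using re
  proof (induct as)
    case (Cons a as)
    have "complex_of_real (Re a) = a" using Cons(2) by (simp add: complex_eq_iff)
    hence "map_poly complex_of_real [:-Re a, 1:] = [:-a, 1:]" by simp
    thus ?case using Cons by (simp only: list.map prod_list.Cons m.hom_mult, simp)
  qed simp
  also have "\<dots> = map_poly complex_of_real (char_poly S)"
    using cp of_real_hom.char_poly_hom[OF S] by metis
  finally have "char_poly S = (\<Prod>e\<leftarrow>es. [:-e, 1:])"
    by (metis m.injectivity)
  moreover have "length es = n" using len es_def by simp
  ultimately show ?thesis by blast
qed



definition nrm :: "real vec \<Rightarrow> real vec" where
  "nrm v = (1 / sqrt (v \<bullet> v)) \<cdot>\<^sub>v v"

lemma nrm_carrier[simp]: "v \<in> carrier_vec n \<Longrightarrow> nrm v \<in> carrier_vec n"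
  unfolding nrm_def by simp

lemma nrm_sprod: assumes v: "v \<in> carrier_vec n" "u \<in> carrier_vec n"
  shows "nrm v \<bullet> nrm u = (v \<bullet> u) / (sqrt (v \<bullet> v) * sqrt (u \<bullet> u))"
  unfolding nrm_def using v
  by (simp add: smult_scalar_prod_distrib scalar_prod_smult_distrib)

lemma sprod_self_pos: assumes "v \<in> carrier_vec n" "v \<noteq> 0\<^sub>v n"
  shows "(v :: real vec) \<bullet> v > 0"
  using conjugate_square_greater_0_vec[OF assms(1)] assms by simp

lemma nrm_unit: assumes "v \<in> carrier_vec n" "v \<noteq> 0\<^sub>v n"
  shows "nrm v \<bullet> nrm v = 1"
  using nrm_sprod[OF assms(1) assms(1)] sprod_self_pos[OF assms]
  by (simp add: real_sqrt_mult_self)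

lemma nrm_nrm: assumes "v \<in> carrier_vec n" "v \<bullet> v = 1"
  shows "nrm v = v" unfolding nrm_def using assms by simp

theorem oschur:
  assumes A: "(A::real mat) \<in> carrier_mat n n"
      and c: "char_poly A = (\<Prod> (e :: real) \<leftarrow> es. [:- e, 1:])"
  shows "\<exists>B P. similar_mat_wit A B P (transpose_mat P) \<and> upper_triangular B \<and> diag_mat B = es"
  using assms
proof (induct es arbitrary: n A)
  case Nil
  with degree_monic_char_poly[of A n]
  show ?case by (intro exI[of _ A] exI[of _ "1\<^sub>m n"], auto intro: similar_mat_wit_refl simp: diag_mat_def)
next
  case (Cons e es n A)
  let ?n1 = "n - 1"
  from Cons have A: "A \<in> carrier_mat n n" and dim: "dim_row A = n" by auto
  let ?cp = "char_poly A"
  from Cons(3)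
  have cp: "?cp = [: -e, 1 :] * (\<Prod>e \<leftarrow> es. [:- e, 1:])" by auto
  have mon: "monic (\<Prod>e\<leftarrow> es. [:- e, 1:])" by (rule monic_prod_list, auto)
  have deg: "Polynomial.degree ?cp = Suc (Polynomial.degree (\<Prod>e\<leftarrow> es. [:- e, 1:]))" unfolding cp
    by (subst degree_mult_eq, insert mon, auto)
  with degree_monic_char_poly[OF A] have n: "n \<noteq> 0" by auto
  have e: "eigenvalue A e" 
    unfolding eigenvalue_root_char_poly[OF A] cp by simp
  define v0 where "v0 = find_eigenvector A e"
  from find_eigenvector[OF A e] have ev0: "eigenvector A v0 e" unfolding v0_def .
  from this[unfolded eigenvector_def]
  have v0[simp]: "v0 \<in> carrier_vec n" and v00: "v0 \<noteq> 0\<^sub>v n" and ev0': "A *\<^sub>v v0 = e \<cdot>\<^sub>v v0" using A by auto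
  define v where "v = nrm v0"
  have v[simp]: "v \<in> carrier_vec n" unfolding v_def by simp
  have vv: "v \<bullet> v = 1" unfolding v_def by (rule nrm_unit[OF v0 v00])
  have v0': "v \<noteq> 0\<^sub>v n" using vv by auto
  have eigen[simp]: "A *\<^sub>v v = e \<cdot>\<^sub>v v" unfolding v_def nrm_def
    using ev0' A by (simp add: mult_mat_vec smult_smult_assoc mult.commute)
  define b where "b = basis_completion v"
  define ws0 where "ws0 = gram_schmidt n b"
  define ws where "ws = map nrm ws0"
  define W where "W = mat_of_cols n ws"
  define W' where "W' = corthogonal_inv W"
  define A' where "A' = W' * A * W"
  interpret cof_vec_space n "TYPE(real)" .
  from basis_completion[OF v v0', folded b_def]
  have span_b: "span (set b) = carrier_vec n" and dist_b: "distinct b" 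
    and indep: "\<not> lin_dep (set b)" and b: "set b \<subseteq> carrier_vec n" and hdb: "hd b = v" 
    and len_b: "length b = n" by auto
  from hdb len_b n obtain vs where bv: "b = v # vs" by (cases b, auto)
  from gram_schmidt_result[OF b dist_b indep refl, folded ws0_def]
  have ws0: "set ws0 \<subseteq> carrier_vec n" "corthogonal ws0" "length ws0 = n" 
    by (auto simp: len_b)
  from gram_schmidt_hd[OF v, of vs, folded bv] have hdws0: "hd ws0 = v" unfolding ws0_def .
  have ws0nz: "ws0 ! i \<bullet> ws0 ! i > 0" if "i < n" for i
  proof -
    have "ws0 ! i \<in> carrier_vec n" using ws0 that by auto
    moreover have "ws0 ! i \<bullet> ws0 ! i \<noteq> 0" using corthogonalD[OF ws0(2), of i i] that ws0(3) by simp
    ultimately have "ws0 ! i \<noteq> 0\<^sub>v n" by auto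
    thus ?thesis using sprod_self_pos \<open>ws0 ! i \<in> carrier_vec n\<close> by blast
  qed
  have wsc: "set ws \<subseteq> carrier_vec n" using ws0(1) unfolding ws_def by auto
  have wslen: "length ws = n" using ws0 unfolding ws_def by simp
  have wsnth: "ws ! i = nrm (ws0 ! i)" if "i < n" for i using that ws0(3) unfolding ws_def by simp
  have wsdot: "ws ! i \<bullet> ws ! j = (if i = j then 1 else 0)" if "i < n" "j < n" for i j
  proof -
    have c: "ws0 ! i \<in> carrier_vec n" "ws0 ! j \<in> carrier_vec n" using ws0 that by auto
    show ?thesis
    proof (cases "i = j")
      case True
      have "ws0 ! i \<noteq> 0\<^sub>v n" using ws0nz[OF that(1)] by auto
      thus ?thesis using wsnth[OF that(1)] nrm_unit[OF c(1)] True by auto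
    next
      case False
      have "ws0 ! i \<bullet> ws0 ! j = 0" using corthogonalD[OF ws0(2), of i j] that ws0(3) False by simp
      thus ?thesis using False wsnth that nrm_sprod[OF c] by simp
    qed
  qed
  have ws: "set ws \<subseteq> carrier_vec n" "corthogonal ws" "length ws = n"
    using wsc wslen wsdot by (auto intro!: corthogonalI)
  have hdws: "hd ws = v" unfolding ws_def using hdws0 n ws0(3) nrm_nrm[OF v vv]
    by (cases ws0, auto)
  have W: "W \<in> carrier_mat n n"
    using ws unfolding W_def using mat_of_cols_carrier(1)[of n ws] by auto
  have W'T: "W' = transpose_mat W"
  proof -
    have "cols W = ws" unfolding W_def using ws by (simp add: cols_mat_of_cols)
    moreover have "map vec_inv ws = ws"
    proof (rule nth_equalityI, simp)
      fix i assume "i < length (map vec_inv ws)"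
      hence i: "i < n" using ws by simp
      have "ws ! i \<in> carrier_vec n" using ws i by auto
      thus "map vec_inv ws ! i = ws ! i" using wsdot[OF i i] i ws(3) unfolding vec_inv_def by simp
    qed
    ultimately show ?thesis unfolding W'_def corthogonal_inv_def W_def transpose_mat_of_cols
      using ws by simp
  qed
  have orth_W: "corthogonal_mat W" using orthogonal_mat_of_cols ws unfolding W_def.
  have W': "W' \<in> carrier_mat n n" unfolding W'T using W by simp
  from corthogonal_inv_result[OF orth_W] 
  have W'W: "inverts_mat W' W" unfolding W'_def .
  hence WW': "inverts_mat W W'" using mat_mult_left_right_inverse[OF W' W] W' W
    unfolding inverts_mat_def by auto
  have A': "A' \<in> carrier_mat n n" using W W' A unfolding A'_def by auto
  have A'A_wit: "similar_mat_wit A' A W' W"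
    by (rule similar_mat_witI[of _ _ n], insert W W' A A' W'W WW', auto simp: A'_def
    inverts_mat_def)
  hence A'A: "similar_mat A' A" unfolding similar_mat_def by blast
  from similar_mat_wit_sym[OF A'A_wit] have simAA': "similar_mat_wit A A' W W'" by auto
  obtain A1 A2 A0 A3 where splitA': "split_block A' 1 1 = (A1,A2,A0,A3)"
    by (cases "split_block A' 1 1", auto)
  let ?f = "(\<lambda> i. if i = 0 then e else 0)"
  have col0: "col A' 0 = vec n ?f"
    unfolding A'_def W'_def W_def
    using corthogonal_col_ev_0[OF A v v0' eigen n hdws ws].
  from A' n have "dim_row A' = 1 + ?n1" "dim_col A' = 1 + ?n1" by auto
  from split_block[OF splitA' this] have A2: "A2 \<in> carrier_mat 1 ?n1"
    and A3: "A3 \<in> carrier_mat ?n1 ?n1" 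
    and A'block: "A' = four_block_mat A1 A2 A0 A3" by auto
  have A1id: "A1 = mat 1 1 (\<lambda> _. e)"
    using splitA'[unfolded split_block_def Let_def] arg_cong[OF col0, of "\<lambda> v. v $ 0"] A' n
    by (auto simp: col_def)
  have A1: "A1 \<in> carrier_mat 1 1" unfolding A1id by auto
  {
    fix i
    assume "i < ?n1"
    with arg_cong[OF col0, of "\<lambda> v. v $ Suc i"] A'
    have "A' $$ (Suc i, 0) = 0" by auto
  } note A'0 = this
  have A0id: "A0 = 0\<^sub>m ?n1 1"
    using splitA'[unfolded split_block_def Let_def] A'0 A' by auto
  have A0: "A0 \<in> carrier_mat ?n1 1" unfolding A0id by auto
  from cp char_poly_similar[OF A'A]
  have cp: "char_poly A' = [: -e,1 :] * (\<Prod> e \<leftarrow> es. [:- e, 1:])" by simp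
  also have "char_poly A' = char_poly A1 * char_poly A3" 
    unfolding A'block A0id
    by (rule char_poly_four_block_zeros_col[OF A1 A2 A3])
  also have "char_poly A1 = [: -e,1 :]"
    by (simp add: A1id char_poly_defs det_def sign_def)
  finally have cp: "char_poly A3 = (\<Prod> e \<leftarrow> es. [:- e, 1:])"
    by (metis mult_cancel_left pCons_eq_0_iff zero_neq_one)
  from Cons(1)[OF A3 cp] obtain B P' where
    simIH: "similar_mat_wit A3 B P' (transpose_mat P')" and ut: "upper_triangular B" and diag: "diag_mat B = es" by auto
  define Q' where "Q' = transpose_mat P'"
  note simIH = simIH[folded Q'_def]
  from similar_mat_witD2[OF A3 simIH] 
  have B: "B \<in> carrier_mat ?n1 ?n1" and P': "P' \<in> carrier_mat ?n1 ?n1" and Q': "Q' \<in> carrier_mat ?n1 ?n1" 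
    and PQ': "P' * Q' = 1\<^sub>m ?n1" by auto
  let ?P' = "four_block_mat (1\<^sub>m 1) (0\<^sub>m 1 ?n1) (0\<^sub>m ?n1 1) P'"
  let ?Q' = "four_block_mat (1\<^sub>m 1) (0\<^sub>m 1 ?n1) (0\<^sub>m ?n1 1) Q'"
  define C where "C = four_block_mat A1 (A2 * P') A0 B"
  define P where "P = W * ?P'"
  define Q where "Q = ?Q' * W'"
  have A0_eq: "A0 = P' * A0 * 1\<^sub>m 1" unfolding A0id using P' by auto
  have simA'C: "similar_mat_wit A' C ?P' ?Q'" unfolding A'block C_def
    by (rule similar_mat_wit_four_block[OF similar_mat_wit_refl[OF A1] simIH _ A0_eq A1 A3 A0],
    insert PQ' A2 P' Q', auto)
  have ut1: "upper_triangular A1" unfolding A1id by auto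
  have ut: "upper_triangular C" unfolding C_def A0id
    by (intro upper_triangular_four_block[OF _ B ut1 ut], auto simp: A1id)
  from A1id have diagA1: "diag_mat A1 = [e]" unfolding diag_mat_def by auto
  from diag_four_block_mat[OF A1 B] have diag: "diag_mat C = e # es" unfolding diag diagA1 C_def by simp
  have P'c: "?P' \<in> carrier_mat n n" using P' n by (auto intro!: four_block_carrier_mat[of _ 1 1 _ ?n1 ?n1, simplified])
  have QT: "Q = transpose_mat P"
  proof -
    have "transpose_mat ?P' = ?Q'" unfolding Q'_def
      by (subst transpose_four_block_mat, insert P', auto)
    thus ?thesis unfolding P_def Q_def W'T using transpose_mult[OF W P'c] by simp
  qed
  from ut similar_mat_wit_trans[OF simAA' simA'C, folded P_def Q_def] diag QT
  show ?case by blast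
qed

lemma mult_entry: assumes "X \<in> carrier_mat n n" "Y \<in> carrier_mat n n" "i < n" "j < n"
  shows "(X * Y) $$ (i,j) = (\<Sum>k<n. X $$ (i,k) * Y $$ (k,j))"
  using assms by (simp add: index_mult_mat scalar_prod_def lessThan_atLeast0)

lemma spectral:
  fixes S :: "real mat"
  assumes S: "S \<in> carrier_mat n n"
    and sym: "\<And>i j. i < n \<Longrightarrow> j < n \<Longrightarrow> S $$ (i,j) = S $$ (j,i)"
    and cp: "char_poly S = (\<Prod>e\<leftarrow>L. [:-e, 1:])"
  shows "\<exists>P. (\<forall>i<n. \<forall>j<n. (\<Sum>k<n. P $$ (k,i) * P $$ (k,j)) = (if i = j then 1 else 0))
     \<and> (\<forall>i<n. \<forall>j<n. (\<Sum>k<n. P $$ (i,k) * P $$ (j,k)) = (if i = j then 1 else 0))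
     \<and> (\<forall>i<n. \<forall>j<n. (\<Sum>k<n. S $$ (i,k) * P $$ (k,j)) = L ! j * P $$ (i,j))"
proof -
  from oschur[OF S cp] obtain B P where
    sim: "similar_mat_wit S B P (transpose_mat P)" and ut: "upper_triangular B" and dg: "diag_mat B = L"
    by blast
  let ?Q = "transpose_mat P"
  from similar_mat_witD2[OF S sim] have B: "B \<in> carrier_mat n n" and P: "P \<in> carrier_mat n n"
    and Q: "?Q \<in> carrier_mat n n" and PQ: "P * ?Q = 1\<^sub>m n" and QP: "?Q * P = 1\<^sub>m n"
    and SPBQ: "S = P * B * ?Q" by auto
  have Sym: "transpose_mat S = S" using S sym by (intro eq_matI, auto)
  have BQSP: "B = ?Q * S * P"
  proof -
    have "?Q * S * P = (?Q * P) * B * (?Q * P)" unfolding SPBQ using P B Q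
      by (simp add: assoc_mult_mat[of _ n n _ n _ n])
    thus ?thesis using QP B by simp
  qed
  have Bsym: "transpose_mat B = B"
  proof -
    have SP: "S * P \<in> carrier_mat n n" using S P by simp
    have "transpose_mat B = transpose_mat (S * P) * transpose_mat ?Q"
      unfolding BQSP using transpose_mult[OF Q SP] assoc_mult_mat[OF Q S P] by simp
    also have "transpose_mat (S * P) = transpose_mat P * transpose_mat S"
      using transpose_mult[OF S P] .
    finally show ?thesis unfolding Sym BQSP using P S Q
      by (simp add: assoc_mult_mat[of _ n n _ n _ n])
  qed
  have Bd: "B $$ (i,j) = (if i = j then L ! i else 0)" if "i < n" "j < n" for i j
  proof (cases "i = j")
    case True thus ?thesis using dg B that unfolding diag_mat_def by auto
  next
    case False
    show ?thesis
    proof (cases "j < i")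
      case True thus ?thesis using ut B that False unfolding upper_triangular_def by auto
    next
      case F: False
      hence "i < j" using False by simp
      hence "B $$ (j,i) = 0" using ut B that unfolding upper_triangular_def by auto
      moreover have "B $$ (j,i) = B $$ (i,j)" using arg_cong[OF Bsym, of "\<lambda>M. M $$ (i,j)"] B that by simp
      ultimately show ?thesis using False by simp
    qed
  qed
  have SPPB: "S * P = P * B"
  proof -
    have "S * P = P * B * (?Q * P)" unfolding SPBQ using P B Q
      by (simp add: assoc_mult_mat[of _ n n _ n _ n])
    thus ?thesis using QP P B by simp
  qed
  show ?thesis
  proof (intro exI[of _ P] conjI allI impI)
    fix i j assume i: "i < n" and j: "j < n"
    show "(\<Sum>k<n. P $$ (k,i) * P $$ (k,j)) = (if i = j then 1 else 0)"
      using arg_cong[OF QP, of "\<lambda>M. M $$ (i,j)"] mult_entry[OF Q P i j] P i j by auto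
    show "(\<Sum>k<n. P $$ (i,k) * P $$ (j,k)) = (if i = j then 1 else 0)"
      using arg_cong[OF PQ, of "\<lambda>M. M $$ (i,j)"] mult_entry[OF P Q i j] P i j by auto
    have "(\<Sum>k<n. P $$ (i,k) * B $$ (k,j)) = (\<Sum>k<n. if k = j then P $$ (i,j) * L ! j else 0)"
      by (rule sum.cong, auto simp: Bd j)
    also have "\<dots> = P $$ (i,j) * L ! j" using j by simp
    finally show "(\<Sum>k<n. S $$ (i,k) * P $$ (k,j)) = L ! j * P $$ (i,j)"
      using arg_cong[OF SPPB, of "\<lambda>M. M $$ (i,j)"] mult_entry[OF S P i j] mult_entry[OF P B i j]
      by simp
  qed
qed



definition Smat :: "nat \<Rightarrow> (nat \<Rightarrow> nat \<Rightarrow> nat) \<Rightarrow> real mat" where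
  "Smat n w = mat n n (\<lambda>(i,j). real (w i j) / sqrt (real (degree n w i) * real (degree n w j)))"

lemma prod_list_mset: "prod_list (map f xs) = prod_mset (image_mset f (mset xs))"
  by (induct xs, auto)

lemma walk_similar:
  assumes mg: "multigraph n w" and pos: "\<forall>v<n. 0 < degree n w v"
  shows "char_poly (walk_matrix n w) = char_poly (Smat n w)"
proof -
  let ?m = "\<lambda>i. real (degree n w i)"
  define Di where "Di = mat n n (\<lambda>(i,j). if i = j then 1 / sqrt (?m i) else 0 :: real)"
  define Dp where "Dp = mat n n (\<lambda>(i,j). if i = j then sqrt (?m i) else 0 :: real)"
  have Di: "Di \<in> carrier_mat n n" and Dp: "Dp \<in> carrier_mat n n" and S: "Smat n w \<in> carrier_mat n n"
    and W: "walk_matrix n w \<in> carrier_mat n n"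
    unfolding Di_def Dp_def Smat_def walk_matrix_def by auto
  have mpos: "?m i > 0" if "i < n" for i using pos that by auto
  have sum1: "(\<Sum>k<n. (if i = k then f k else 0) * g k) = f i * g i" if "i < n" for i and f g :: "nat \<Rightarrow> real"
  proof -
    have "(\<Sum>k<n. (if i = k then f k else 0) * g k) = (\<Sum>k<n. if k = i then f i * g i else 0)"
      by (rule sum.cong, auto)
    thus ?thesis using that by simp
  qed
  have sum2: "(\<Sum>k<n. g k * (if k = j then f k else 0)) = g j * f j" if "j < n" for j and f g :: "nat \<Rightarrow> real"
  proof -
    have "(\<Sum>k<n. g k * (if k = j then f k else 0)) = (\<Sum>k<n. if k = j then g j * f j else 0)"
      by (rule sum.cong, auto)
    thus ?thesis using that by simp
  qed
  have DiDp: "Di * Dp = 1\<^sub>m n"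
  proof (rule eq_matI)
    fix i j assume "i < dim_row (1\<^sub>m n)" "j < dim_col (1\<^sub>m n)"
    hence i: "i < n" and j: "j < n" by auto
    have "(Di * Dp) $$ (i,j) = (\<Sum>k<n. (if i = k then 1 / sqrt (?m i) else 0) * (if k = j then sqrt (?m k) else 0))"
      unfolding mult_entry[OF Di Dp i j] using i j by (intro sum.cong, auto simp: Di_def Dp_def)
    also have "\<dots> = (if i = j then 1 else 0)" using sum1[OF i, of "\<lambda>_. 1 / sqrt (?m i)"] mpos[OF i] by auto
    finally show "(Di * Dp) $$ (i,j) = 1\<^sub>m n $$ (i,j)" using i j by simp
  qed (insert Di Dp, auto)
  have DpDi: "Dp * Di = 1\<^sub>m n"
  proof (rule eq_matI)
    fix i j assume "i < dim_row (1\<^sub>m n)" "j < dim_col (1\<^sub>m n)"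
    hence i: "i < n" and j: "j < n" by auto
    have "(Dp * Di) $$ (i,j) = (\<Sum>k<n. (if i = k then sqrt (?m i) else 0) * (if k = j then 1 / sqrt (?m k) else 0))"
      unfolding mult_entry[OF Dp Di i j] using i j by (intro sum.cong, auto simp: Di_def Dp_def)
    also have "\<dots> = (if i = j then 1 else 0)" using sum1[OF i, of "\<lambda>_. sqrt (?m i)"] mpos[OF i] by auto
    finally show "(Dp * Di) $$ (i,j) = 1\<^sub>m n $$ (i,j)" using i j by simp
  qed (insert Di Dp, auto)
  have DS: "Di * Smat n w \<in> carrier_mat n n" using Di S by simp
  have e1: "(Di * Smat n w) $$ (i,k) = Smat n w $$ (i,k) / sqrt (?m i)" if "i < n" "k < n" for i k
  proof -
    have "(Di * Smat n w) $$ (i,k) = (\<Sum>j<n. (if i = j then 1 / sqrt (?m i) else 0) * Smat n w $$ (j,k))"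
      unfolding mult_entry[OF Di S that] using that by (intro sum.cong, auto simp: Di_def)
    also have "\<dots> = Smat n w $$ (i,k) / sqrt (?m i)" using sum1[OF that(1)] by simp
    finally show ?thesis .
  qed
  have eq: "walk_matrix n w = Di * Smat n w * Dp"
  proof (rule eq_matI)
    fix i j assume i: "i < dim_row (Di * Smat n w * Dp)" and j: "j < dim_col (Di * Smat n w * Dp)"
    hence i: "i < n" and j: "j < n" using Di Dp by auto
    have "(Di * Smat n w * Dp) $$ (i,j) = Smat n w $$ (i,j) / sqrt (?m i) * sqrt (?m j)"
    proof -
      have "(Di * Smat n w * Dp) $$ (i,j) = (\<Sum>k<n. Smat n w $$ (i,k) / sqrt (?m i) * (if k = j then sqrt (?m k) else 0))"
        unfolding mult_entry[OF DS Dp i j] using i j by (intro sum.cong, auto simp: Dp_def e1)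
      thus ?thesis using sum2[OF j, of "\<lambda>k. Smat n w $$ (i,k) / sqrt (?m i)" "\<lambda>k. sqrt (?m k)"] by simp
    qed
    also have "\<dots> = real (w i j) / ?m i"
      using i j mpos[OF i] mpos[OF j] unfolding Smat_def
      by (simp add: real_sqrt_mult field_simps)
    finally show "walk_matrix n w $$ (i,j) = (Di * Smat n w * Dp) $$ (i,j)"
      unfolding walk_matrix_def using i j by simp
  qed (insert Di Dp S, auto simp: walk_matrix_def)
  have "similar_mat (walk_matrix n w) (Smat n w)"
    unfolding similar_mat_def similar_mat_wit_def Let_def
    by (intro exI[of _ Di] exI[of _ Dp], insert eq Di Dp S W DiDp DpDi, auto)
  thus ?thesis by (rule char_poly_similar)
qed

lemma proots_lin: "proots (\<Prod>e\<leftarrow>es. [:-e, 1:]) = mset (es :: real list)"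
proof (induct es)
  case (Cons e es)
  have nz: "(\<Prod>e\<leftarrow>es. [:-e, 1:]) \<noteq> (0 :: real poly)"
    by (auto simp: prod_list_zero_iff)
  have "(\<Prod>e\<leftarrow>e#es. [:-e, 1:]) = [:-e,1:] * (\<Prod>e\<leftarrow>es. [:-e, 1:])" by simp
  also have "proots \<dots> = proots [:-e,1:] + proots (\<Prod>e\<leftarrow>es. [:-e, 1:])"
    by (rule proots_mult, simp, rule nz)
  finally have "proots (\<Prod>e\<leftarrow>e#es. [:-e, 1:]) = proots [:-e,1:] + proots (\<Prod>e\<leftarrow>es. [:-e, 1:])" .
  thus ?case using Cons by (simp add: proots_linear_factor)
qed simp

lemma Smat_sym: assumes mg: "multigraph n w" and i: "i < n" and j: "j < n"
  shows "Smat n w $$ (i,j) = Smat n w $$ (j,i)"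
  using mg i j unfolding Smat_def multigraph_def by (simp add: mult.commute)

lemma walk_spec:
  assumes mg: "multigraph n w" and pos: "\<forall>v<n. 0 < degree n w v"
  shows "length (walk_eigenvalues n w) = n
    \<and> (\<forall>i j. i \<le> j \<longrightarrow> j < n \<longrightarrow> walk_eigenvalues n w ! j \<le> walk_eigenvalues n w ! i)
    \<and> (\<exists>P. (\<forall>i<n. \<forall>j<n. (\<Sum>k<n. P $$ (k,i) * P $$ (k,j)) = (if i = j then 1 else 0))
     \<and> (\<forall>i<n. \<forall>j<n. (\<Sum>k<n. P $$ (i,k) * P $$ (j,k)) = (if i = j then 1 else 0))
     \<and> (\<forall>i<n. \<forall>j<n. (\<Sum>k<n. Smat n w $$ (i,k) * P $$ (k,j)) = walk_eigenvalues n w ! j * P $$ (i,j)))"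
proof -
  have S: "Smat n w \<in> carrier_mat n n" unfolding Smat_def by simp
  from sym_real_split[OF S Smat_sym[OF mg]] obtain es where
    cp: "char_poly (Smat n w) = (\<Prod>e\<leftarrow>es. [:-e, 1:])" and len: "length es = n" by blast
  have WL: "walk_eigenvalues n w = rev (sort es)"
    unfolding walk_eigenvalues_def walk_similar[OF mg pos] cp proots_lin
    by (simp add: sorted_list_of_multiset_mset)
  have cp2: "char_poly (Smat n w) = (\<Prod>e\<leftarrow>walk_eigenvalues n w. [:-e, 1:])"
    unfolding cp WL prod_list_mset by simp
  from spectral[OF S Smat_sym[OF mg] cp2] obtain P where P:
    "(\<forall>i<n. \<forall>j<n. (\<Sum>k<n. P $$ (k,i) * P $$ (k,j)) = (if i = j then 1 else 0))
     \<and> (\<forall>i<n. \<forall>j<n. (\<Sum>k<n. P $$ (i,k) * P $$ (j,k)) = (if i = j then 1 else 0))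
     \<and> (\<forall>i<n. \<forall>j<n. (\<Sum>k<n. Smat n w $$ (i,k) * P $$ (k,j)) = walk_eigenvalues n w ! j * P $$ (i,j))"
    by blast
  have "length (walk_eigenvalues n w) = n" unfolding WL using len by simp
  moreover have "\<forall>i j. i \<le> j \<longrightarrow> j < n \<longrightarrow> walk_eigenvalues n w ! j \<le> walk_eigenvalues n w ! i"
    using sorted_rev_nth_mono[of "rev (sort es)"] len unfolding WL by simp
  ultimately show ?thesis using P by blast
qed



locale spec =
  fixes n :: nat and s p :: "nat \<Rightarrow> nat \<Rightarrow> real" and L :: "real list"
  assumes orth: "\<And>i j. i < n \<Longrightarrow> j < n \<Longrightarrow> (\<Sum>k<n. p k i * p k j) = (if i = j then 1 else 0)"
    and comp: "\<And>i j. i < n \<Longrightarrow> j < n \<Longrightarrow> (\<Sum>k<n. p i k * p j k) = (if i = j then 1 else 0)"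
    and eig: "\<And>i j. i < n \<Longrightarrow> j < n \<Longrightarrow> (\<Sum>k<n. s i k * p k j) = L ! j * p i j"
begin

definition coef :: "(nat \<Rightarrow> real) \<Rightarrow> nat \<Rightarrow> real" where
  "coef x i = (\<Sum>k<n. p k i * x k)"

lemma expand: assumes j: "j < n" shows "x j = (\<Sum>i<n. coef x i * p j i)"
proof -
  have "(\<Sum>i<n. coef x i * p j i) = (\<Sum>i<n. \<Sum>k<n. x k * (p k i * p j i))"
    unfolding coef_def sum_distrib_right by (simp add: algebra_simps)
  also have "\<dots> = (\<Sum>k<n. x k * (\<Sum>i<n. p k i * p j i))"
    by (subst sum.swap, simp add: sum_distrib_left)
  also have "\<dots> = (\<Sum>k<n. if k = j then x j else 0)"
    by (rule sum.cong, auto simp: comp j)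
  also have "\<dots> = x j" using j by simp
  finally show ?thesis by simp
qed

lemma coef_of: assumes x: "\<And>j. j < n \<Longrightarrow> x j = (\<Sum>l<n. y l * p j l)" and i: "i < n"
  shows "coef x i = y i"
proof -
  have "coef x i = (\<Sum>k<n. \<Sum>l<n. y l * (p k i * p k l))"
    unfolding coef_def using x by (simp add: sum_distrib_left algebra_simps)
  also have "\<dots> = (\<Sum>l<n. y l * (\<Sum>k<n. p k i * p k l))"
    by (subst sum.swap, simp add: sum_distrib_left)
  also have "\<dots> = (\<Sum>l<n. if l = i then y i else 0)"
    by (rule sum.cong, auto simp: orth i)
  also have "\<dots> = y i" using i by simp
  finally show ?thesis .
qed

lemma inner: "(\<Sum>j<n. x j * z j) = (\<Sum>i<n. coef x i * coef z i)"
proof -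
  have "(\<Sum>j<n. x j * z j) = (\<Sum>j<n. x j * (\<Sum>i<n. coef z i * p j i))"
    by (rule sum.cong, auto simp: expand[of _ z, symmetric])
  also have "\<dots> = (\<Sum>i<n. coef z i * (\<Sum>j<n. p j i * x j))"
    unfolding sum_distrib_left by (subst sum.swap, intro sum.cong refl, simp add: algebra_simps)
  finally show ?thesis unfolding coef_def by (simp add: mult.commute)
qed

lemma Sx: assumes j: "j < n" shows "(\<Sum>k<n. s j k * x k) = (\<Sum>i<n. L ! i * coef x i * p j i)"
proof -
  have "(\<Sum>k<n. s j k * x k) = (\<Sum>k<n. s j k * (\<Sum>i<n. coef x i * p k i))"
    by (rule sum.cong, auto simp: expand[of _ x, symmetric])
  also have "\<dots> = (\<Sum>i<n. coef x i * (\<Sum>k<n. s j k * p k i))"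
    unfolding sum_distrib_left by (subst sum.swap, intro sum.cong refl, simp add: algebra_simps)
  also have "\<dots> = (\<Sum>i<n. L ! i * coef x i * p j i)"
    by (rule sum.cong, auto simp: eig j)
  finally show ?thesis .
qed

lemma coef_S: assumes i: "i < n" shows "coef (\<lambda>j. \<Sum>k<n. s j k * x k) i = L ! i * coef x i"
proof (rule coef_of[OF _ i])
  fix j assume j: "j < n"
  show "(\<Sum>k<n. s j k * x k) = (\<Sum>l<n. L ! l * coef x l * p j l)" by (rule Sx[OF j])
qed

lemma quad: "(\<Sum>j<n. x j * (\<Sum>k<n. s j k * x k)) = (\<Sum>i<n. L ! i * (coef x i)^2)"
  by (rule trans[OF inner], rule sum.cong, auto simp: coef_S power2_eq_square)

lemma norm: "(\<Sum>j<n. (x j)^2) = (\<Sum>i<n. (coef x i)^2)"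
  using inner[of x x] by (simp add: power2_eq_square)

lemma zero_if_coef_zero: assumes "\<And>i. i < n \<Longrightarrow> coef x i = 0" "j < n" shows "x j = 0"
  using expand[OF assms(2), of x] assms by simp


lemma sum_01: assumes n: "1 < n" and z: "\<And>i. 2 \<le> i \<Longrightarrow> f i = 0"
  shows "(\<Sum>i<n. f i) = f 0 + (f 1 :: real)"
proof -
  have "(\<Sum>i<n. f i) = (\<Sum>i\<in>{0,1}. f i)"
    by (rule sum.mono_neutral_right, insert n z, auto)
  thus ?thesis by simp
qed

lemma gside:
  assumes n: "1 < n" and sorted: "\<And>i j. i \<le> j \<Longrightarrow> j < n \<Longrightarrow> L ! j \<le> L ! i"
    and l1: "L ! 1 < lam" and lam1: "lam < 1"
    and tfix: "\<And>j. j < n \<Longrightarrow> (\<Sum>k<n. s j k * t k) = t j" and tnz: "t j0 \<noteq> 0" "j0 < n"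
    and xt: "(\<Sum>j<n. x j * t j) = 0" and xnz: "x j1 \<noteq> 0" "j1 < n"
  shows "(\<Sum>j<n. x j * (\<Sum>k<n. s j k * x k)) < lam * (\<Sum>j<n. (x j)^2)"
proof -
  have ct: "coef t i = 0" if i: "i < n" "1 \<le> i" for i
  proof -
    have "coef (\<lambda>j. \<Sum>k<n. s j k * t k) i = coef t i" unfolding coef_def
      by (rule sum.cong, auto simp: tfix)
    hence "coef t i = L ! i * coef t i" using coef_S[OF i(1), of t] by simp
    moreover have "L ! i < 1" using sorted[OF i(2) i(1)] l1 lam1 by simp
    ultimately show ?thesis by (metis mult_cancel_right1 order_less_irrefl)
  qed
  have ct0: "coef t 0 \<noteq> 0"
  proof
    assume "coef t 0 = 0"
    hence "\<And>i. i < n \<Longrightarrow> coef t i = 0" using ct by (metis less_one not_less)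
    hence "t j0 = 0" using zero_if_coef_zero tnz(2) by blast
    thus False using tnz by simp
  qed
  have "0 = (\<Sum>i<n. coef x i * coef t i)" using xt inner by simp
  also have "\<dots> = (\<Sum>i<n. if i = 0 then coef x 0 * coef t 0 else 0)"
    by (rule sum.cong, auto simp: ct)
  also have "\<dots> = coef x 0 * coef t 0" using n by simp
  finally have cx0: "coef x 0 = 0" using ct0 by simp
  obtain i where i: "i < n" "coef x i \<noteq> 0"
    using zero_if_coef_zero[of x j1] xnz by blast
  have "(\<Sum>j<n. x j * (\<Sum>k<n. s j k * x k)) = (\<Sum>i<n. L ! i * (coef x i)^2)" by (rule quad)
  also have "\<dots> < (\<Sum>i<n. lam * (coef x i)^2)"
  proof (rule sum_strict_mono_ex1)
    show "\<forall>k\<in>{..<n}. L ! k * (coef x k)^2 \<le> lam * (coef x k)^2"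
    proof
      fix k assume k: "k \<in> {..<n}"
      show "L ! k * (coef x k)^2 \<le> lam * (coef x k)^2"
      proof (cases "k = 0")
        case True thus ?thesis using cx0 by simp
      next
        case False
        hence "L ! k < lam" using sorted[of 1 k] k l1 by simp
        thus ?thesis by (intro mult_right_mono, auto)
      qed
    qed
    have "i \<noteq> 0" using i cx0 by (metis)
    hence "L ! i < lam" using sorted[of 1 i] i l1 by simp
    moreover have "(coef x i)^2 > 0" using i by simp
    ultimately show "\<exists>k\<in>{..<n}. L ! k * (coef x k)^2 < lam * (coef x k)^2"
      using i by (intro bexI[of _ i], auto)
  qed simp
  also have "\<dots> = lam * (\<Sum>j<n. (x j)^2)" unfolding norm[of x] by (simp add: sum_distrib_left)
  finally show ?thesis .
qed

lemma g1side:
  assumes n: "1 < n" and sorted: "\<And>i j. i \<le> j \<Longrightarrow> j < n \<Longrightarrow> L ! j \<le> L ! i"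
    and key: "\<And>x. (\<Sum>j<n. x j * t j) = 0 \<Longrightarrow> (\<exists>j<n. x j \<noteq> 0) \<Longrightarrow>
       (\<Sum>j<n. x j * (\<Sum>k<n. s j k * x k)) < c * (\<Sum>j<n. (x j)^2)"
  shows "L ! 1 < c"
proof (rule ccontr)
  assume "\<not> L ! 1 < c"
  hence c1: "c \<le> L ! 1" by simp
  hence c0: "c \<le> L ! 0" using sorted[of 0 1] n by simp
  define a where "a = coef t 0"
  define b where "b = coef t 1"
  define y0 where "y0 = (if a = 0 \<and> b = 0 then 1 else b)"
  define y1 where "y1 = (if a = 0 \<and> b = 0 then 0 else - a)"
  have ynz: "y0 \<noteq> 0 \<or> y1 \<noteq> 0" unfolding y0_def y1_def by auto
  have yt: "y0 * a + y1 * b = 0" unfolding y0_def y1_def by auto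
  define y where "y = (\<lambda>i::nat. if i = 0 then y0 else if i = 1 then y1 else 0)"
  define x where "x = (\<lambda>j. \<Sum>l<n. y l * p j l)"
  have cx: "coef x i = y i" if "i < n" for i
    by (rule coef_of[OF _ that], simp add: x_def)
  have "(\<Sum>j<n. x j * t j) = (\<Sum>i<n. coef x i * coef t i)" by (rule inner)
  also have "\<dots> = (\<Sum>i<n. y i * coef t i)" by (rule sum.cong, auto simp: cx)
  also have "\<dots> = y 0 * coef t 0 + y 1 * coef t 1" by (rule sum_01[OF n], simp add: y_def)
  also have "\<dots> = 0" using yt unfolding y_def a_def b_def by simp
  finally have xt: "(\<Sum>j<n. x j * t j) = 0" .
  have xnz: "\<exists>j<n. x j \<noteq> 0"
  proof (rule ccontr)
    assume "\<not> (\<exists>j<n. x j \<noteq> 0)"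
    hence "\<And>i. coef x i = 0" unfolding coef_def by simp
    moreover have "coef x 0 = y 0" using cx[of 0] n by simp
    moreover have "coef x 1 = y 1" using cx[of 1] n by simp
    ultimately have "y 0 = 0" "y 1 = 0" by metis+
    thus False using ynz unfolding y_def by simp
  qed
  have "c * (\<Sum>j<n. (x j)^2) = c * (\<Sum>i<n. (y i)^2)" unfolding norm[of x]
    by (intro arg_cong[where f="\<lambda>s. c * s"] sum.cong, auto simp: cx)
  also have "\<dots> = c * (y0^2 + y1^2)" by (subst sum_01[OF n], auto simp: y_def)
  also have "\<dots> \<le> L ! 0 * y0^2 + L ! 1 * y1^2"
    using mult_right_mono[OF c0, of "y0^2"] mult_right_mono[OF c1, of "y1^2"]
    by (simp add: distrib_left)
  also have "\<dots> = (\<Sum>i<n. L ! i * (y i)^2)" by (subst sum_01[OF n], auto simp: y_def)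
  also have "\<dots> = (\<Sum>i<n. L ! i * (coef x i)^2)" by (rule sum.cong, auto simp: cx)
  also have "\<dots> = (\<Sum>j<n. x j * (\<Sum>k<n. s j k * x k))" by (rule quad[symmetric])
  finally show False using key[OF xt xnz] by simp
qed

end



lemma Smat_entry: "i < n \<Longrightarrow> j < n \<Longrightarrow> Smat n w $$ (i,j) =
   real (w i j) / (sqrt (real (degree n w i)) * sqrt (real (degree n w j)))"
  by (simp add: Smat_def real_sqrt_mult)

lemma quad_tr:
  assumes pos: "\<forall>v<n. 0 < degree n w v"
  shows "(\<Sum>j<n. (sqrt (real (degree n w j)) * \<phi> j) *
           (\<Sum>k<n. Smat n w $$ (j,k) * (sqrt (real (degree n w k)) * \<phi> k)))
       = (\<Sum>j<n. \<Sum>k<n. real (w j k) * \<phi> j * \<phi> k)"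
  unfolding sum_distrib_left
proof (intro sum.cong refl)
  fix j k assume j: "j \<in> {..<n}" and k: "k \<in> {..<n}"
  have "sqrt (real (degree n w j)) > 0" "sqrt (real (degree n w k)) > 0" using pos j k by auto
  thus "sqrt (real (degree n w j)) * \<phi> j * (Smat n w $$ (j, k) * (sqrt (real (degree n w k)) * \<phi> k))
     = real (w j k) * \<phi> j * \<phi> k"
    using j k by (simp add: Smat_entry field_simps)
qed

lemma norm_tr:
  assumes pos: "\<forall>v<n. 0 < degree n w v"
  shows "(\<Sum>j<n. (sqrt (real (degree n w j)) * \<phi> j)^2) = (\<Sum>j<n. real (degree n w j) * (\<phi> j)^2)"
  by (rule sum.cong, auto simp: power_mult_distrib)

lemma tfix:
  assumes pos: "\<forall>v<n. 0 < degree n w v" and j: "j < n"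
  shows "(\<Sum>k<n. Smat n w $$ (j,k) * sqrt (real (degree n w k))) = sqrt (real (degree n w j))"
proof -
  have sj: "sqrt (real (degree n w j)) > 0" using pos j by auto
  have "(\<Sum>k<n. Smat n w $$ (j,k) * sqrt (real (degree n w k))) = (\<Sum>k<n. real (w j k) / sqrt (real (degree n w j)))"
  proof (rule sum.cong, simp)
    fix k assume k: "k \<in> {..<n}"
    have "sqrt (real (degree n w k)) > 0" using pos k by auto
    thus "Smat n w $$ (j,k) * sqrt (real (degree n w k)) = real (w j k) / sqrt (real (degree n w j))"
      using j k by (simp add: Smat_entry)
  qed
  also have "\<dots> = real (degree n w j) / sqrt (real (degree n w j))"
    unfolding degree_def by (simp add: sum_divide_distrib)
  also have "\<dots> = sqrt (real (degree n w j))" using sj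
    by (metis less_eq_real_def real_div_sqrt of_nat_0_le_iff)
  finally show ?thesis .
qed

lemma degree_union: "degree n (\<lambda>u v. w1 u v + w2 u v) v = degree n w1 v + degree n w2 v"
  unfolding degree_def by (simp add: sum.distrib)

lemma multigraph_union: "multigraph n w1 \<Longrightarrow> multigraph n w2 \<Longrightarrow> multigraph n (\<lambda>u v. w1 u v + w2 u v)"
  unfolding multigraph_def by auto

lemma quad_lower:
  assumes mg: "multigraph n w"
  shows "(\<Sum>j<n. \<Sum>k<n. real (w j k) * \<phi> j * \<phi> k) \<ge> - (\<Sum>j<n. real (degree n w j) * (\<phi> j)^2)"
proof -
  let ?Q = "(\<Sum>j<n. \<Sum>k<n. real (w j k) * \<phi> j * \<phi> k)"
  let ?M = "(\<Sum>j<n. real (degree n w j) * (\<phi> j)^2)"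
  have M1: "(\<Sum>j<n. \<Sum>k<n. real (w j k) * (\<phi> j)^2) = ?M"
    unfolding degree_def by (simp add: sum_distrib_right)
  have M2: "(\<Sum>j<n. \<Sum>k<n. real (w j k) * (\<phi> k)^2) = ?M"
  proof -
    have "(\<Sum>j<n. \<Sum>k<n. real (w j k) * (\<phi> k)^2) = (\<Sum>k<n. \<Sum>j<n. real (w k j) * (\<phi> k)^2)"
      using mg unfolding multigraph_def by (subst sum.swap, simp)
    thus ?thesis using M1 by simp
  qed
  have "0 \<le> (\<Sum>j<n. \<Sum>k<n. real (w j k) * (\<phi> j + \<phi> k)^2)"
    by (intro sum_nonneg, auto)
  also have "\<dots> = (\<Sum>j<n. \<Sum>k<n. real (w j k) * (\<phi> j)^2) + 2 * ?Q + (\<Sum>j<n. \<Sum>k<n. real (w j k) * (\<phi> k)^2)"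
    by (simp add: power2_eq_square algebra_simps sum.distrib sum_distrib_left)
  finally show ?thesis using M1 M2 by simp
qed

theorem lemma4p12:
  fixes n :: nat and w1 w2 :: "nat \<Rightarrow> nat \<Rightarrow> nat" and lam eps :: real
  assumes "2 \<le> n"
    and "multigraph n w1" and "multigraph n w2"
    and "0 \<le> lam" and "lam < 1" and "0 \<le> eps" and "eps < 1"
    and "graph_connected n (\<lambda>u v. w1 u v + w2 u v)"
    and "second_eigenvalue n (\<lambda>u v. w1 u v + w2 u v) < lam"
    and "\<forall>v<n. 0 < degree n w1 v \<and> real (degree n w2 v) / real (degree n w1 v) \<le> eps"
    and "eps < (1 - lam) / 4"
  shows "graph_connected n w1 \<and> second_eigenvalue n w1 < lam + 4 * eps"
proof -
  note n = assms(1) and mg1 = assms(2) and mg2 = assms(3) and lam0 = assms(4) and lam1 = assms(5)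
    and eps0 = assms(6) and sec = assms(9) and rat = assms(10) and epsl = assms(11)
  define W where "W = (\<lambda>u v. w1 u v + w2 u v)"
  define m where "m = (\<lambda>v. real (degree n W v))"
  define m1 where "m1 = (\<lambda>v. real (degree n w1 v))"
  define m2 where "m2 = (\<lambda>v. real (degree n w2 v))"
  have mm: "m v = m1 v + m2 v" for v unfolding m_def m1_def m2_def W_def degree_union by simp
  have mgW: "multigraph n W" unfolding W_def by (rule multigraph_union[OF mg1 mg2])
  have pos1: "\<forall>v<n. 0 < degree n w1 v" using rat by auto
  have posW: "\<forall>v<n. 0 < degree n W v" using pos1 unfolding W_def degree_union by auto
  have m1pos: "m1 v > 0" if "v < n" for v using pos1 that unfolding m1_def by auto
  have m2eps: "m2 v \<le> eps * m1 v" if "v < n" for v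
    using rat that m1pos[OF that] unfolding m1_def m2_def by (auto simp: divide_le_eq)
  have m2nn: "m2 v \<ge> 0" for v unfolding m2_def by simp
  have n1: "1 < n" using n by simp
  have keyG: "(\<Sum>j<n. \<Sum>k<n. real (W j k) * \<phi> j * \<phi> k) < lam * (\<Sum>j<n. m j * (\<phi> j)^2)"
    if phi: "(\<Sum>v<n. m v * \<phi> v) = 0" "v1 < n" "\<phi> v1 \<noteq> 0" for \<phi> v1
  proof -
    note wsp = walk_spec[OF mgW posW]
    have len: "length (walk_eigenvalues n W) = n" using wsp by blast
    have srt: "\<forall>i j. i \<le> j \<longrightarrow> j < n \<longrightarrow> walk_eigenvalues n W ! j \<le> walk_eigenvalues n W ! i" using wsp by blast
    from conjunct2[OF conjunct2[OF wsp]] obtain P where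
      Ps: "(\<forall>i<n. \<forall>j<n. (\<Sum>k<n. P $$ (k,i) * P $$ (k,j)) = (if i = j then 1 else 0))"
          "(\<forall>i<n. \<forall>j<n. (\<Sum>k<n. P $$ (i,k) * P $$ (j,k)) = (if i = j then 1 else 0))"
          "(\<forall>i<n. \<forall>j<n. (\<Sum>k<n. Smat n W $$ (i,k) * P $$ (k,j)) = walk_eigenvalues n W ! j * P $$ (i,j))"
      by blast
    interpret sp: spec n "\<lambda>i k. Smat n W $$ (i,k)" "\<lambda>i k. P $$ (i,k)" "walk_eigenvalues n W"
      by (unfold_locales, insert Ps, blast+)
    have l1: "walk_eigenvalues n W ! 1 < lam" using sec unfolding W_def second_eigenvalue_def .
    have "(\<Sum>j<n. (sqrt (m j) * \<phi> j) * (\<Sum>k<n. Smat n W $$ (j,k) * (sqrt (m k) * \<phi> k)))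
       < lam * (\<Sum>j<n. (sqrt (m j) * \<phi> j)^2)"
    proof (rule sp.gside[OF n1 _ l1 lam1, of "\<lambda>j. sqrt (m j)" 0 _ v1])
      show "\<And>i j. i \<le> j \<Longrightarrow> j < n \<Longrightarrow> walk_eigenvalues n W ! j \<le> walk_eigenvalues n W ! i"
        using srt by blast
      show "\<And>j. j < n \<Longrightarrow> (\<Sum>k<n. Smat n W $$ (j, k) * sqrt (m k)) = sqrt (m j)"
        unfolding m_def by (rule tfix[OF posW])
      show "sqrt (m 0) \<noteq> 0" "0 < n" using posW n unfolding m_def by auto
      show "sqrt (m v1) * \<phi> v1 \<noteq> 0" "v1 < n" using phi posW unfolding m_def by auto
      have "(\<Sum>j<n. sqrt (m j) * \<phi> j * sqrt (m j)) = (\<Sum>v<n. m v * \<phi> v)"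
        by (rule sum.cong, auto simp: m_def)
      thus "(\<Sum>j<n. sqrt (m j) * \<phi> j * sqrt (m j)) = 0" using phi by simp
    qed
    thus ?thesis using quad_tr[OF posW, of \<phi>] norm_tr[OF posW, of \<phi>] unfolding m_def by simp
  qed
  have key1: "(\<Sum>j<n. \<Sum>k<n. real (w1 j k) * \<phi> j * \<phi> k) < (lam + 4 * eps) * (\<Sum>j<n. m1 j * (\<phi> j)^2)"
    if phi: "(\<Sum>v<n. m v * \<phi> v) = 0" "v1 < n" "\<phi> v1 \<noteq> 0" for \<phi> v1
  proof -
    define Q1 where "Q1 = (\<Sum>j<n. \<Sum>k<n. real (w1 j k) * \<phi> j * \<phi> k)"
    define Q2 where "Q2 = (\<Sum>j<n. \<Sum>k<n. real (w2 j k) * \<phi> j * \<phi> k)"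
    define M1 where "M1 = (\<Sum>j<n. m1 j * (\<phi> j)^2)"
    define M2 where "M2 = (\<Sum>j<n. m2 j * (\<phi> j)^2)"
    have QQ: "(\<Sum>j<n. \<Sum>k<n. real (W j k) * \<phi> j * \<phi> k) = Q1 + Q2"
      unfolding Q1_def Q2_def W_def by (simp add: algebra_simps sum.distrib)
    have MM: "(\<Sum>j<n. m j * (\<phi> j)^2) = M1 + M2"
      unfolding M1_def M2_def mm by (simp add: algebra_simps sum.distrib)
    have Q2l: "Q2 \<ge> - M2" unfolding Q2_def M2_def m2_def by (rule quad_lower[OF mg2])
    have M2le: "M2 \<le> eps * M1" unfolding M1_def M2_def sum_distrib_left
      by (rule sum_mono, insert m2eps, auto simp: mult_right_mono mult.assoc[symmetric])
    have M2nn: "M2 \<ge> 0" unfolding M2_def by (intro sum_nonneg, auto simp: m2nn)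
    have M1pos: "M1 > 0"
    proof -
      have "m1 v1 * (\<phi> v1)^2 > 0" using m1pos[OF phi(2)] phi(3) by simp
      moreover have "m1 v1 * (\<phi> v1)^2 \<le> M1" unfolding M1_def
        by (rule member_le_sum, insert phi(2) m1pos, auto simp: less_imp_le)
      ultimately show ?thesis by simp
    qed
    from keyG[OF phi] have "Q1 + Q2 < lam * (M1 + M2)" unfolding QQ MM .
    hence "Q1 < lam * M1 + (lam + 1) * M2" using Q2l by (simp add: algebra_simps)
    also have "(lam + 1) * M2 \<le> 2 * M2" using lam1 M2nn by (intro mult_right_mono, auto)
    also have "2 * M2 \<le> 2 * eps * M1" using M2le by simp
    also have "lam * M1 + 2 * eps * M1 \<le> (lam + 4 * eps) * M1" using eps0 M1pos
      by (simp add: algebra_simps)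
    finally show ?thesis unfolding Q1_def M1_def by simp
  qed
  have c1: "lam + 4 * eps < 1" using epsl by simp
  have conn: "graph_connected n w1"
  proof (rule ccontr)
    assume "\<not> graph_connected n w1"
    then obtain u0 v0 where u0: "u0 < n" "v0 < n" "(u0,v0) \<notin> (adj_rel n w1)\<^sup>*"
      unfolding graph_connected_def by blast
    define C where "C = {v. (u0,v) \<in> (adj_rel n w1)\<^sup>*}"
    define a where "a = (\<Sum>v<n. if v \<in> C then 0 else m v)"
    define b where "b = (\<Sum>v<n. if v \<in> C then m v else 0)"
    define \<phi> where "\<phi> = (\<lambda>v. if v \<in> C then a else - b)"
    have mpos: "m v > 0" if "v < n" for v using m1pos[OF that] m2nn[of v] mm[of v] by simp
    have v0C: "v0 \<notin> C" using u0 unfolding C_def by simp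
    have u0C: "u0 \<in> C" unfolding C_def by simp
    have apos: "a > 0"
    proof -
      have "(if v0 \<in> C then 0 else m v0) \<le> a" unfolding a_def
        by (rule member_le_sum, insert u0(2) mpos, auto simp: less_imp_le)
      thus ?thesis using v0C mpos[OF u0(2)] by simp
    qed
    have phi0: "(\<Sum>v<n. m v * \<phi> v) = 0"
    proof -
      have "(\<Sum>v<n. m v * \<phi> v) = (\<Sum>v<n. a * (if v \<in> C then m v else 0) - b * (if v \<in> C then 0 else m v))"
        by (rule sum.cong, auto simp: \<phi>_def)
      also have "\<dots> = a * b - b * a" unfolding sum_subtractf sum_distrib_left[symmetric] a_def b_def by simp
      finally show ?thesis by simp
    qed
    have pu0: "\<phi> u0 \<noteq> 0" using u0C apos unfolding \<phi>_def by simp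
    have closed: "(j \<in> C) = (k \<in> C)" if "j < n" "k < n" "w1 j k > 0" for j k
    proof -
      have "(j,k) \<in> adj_rel n w1" using that unfolding adj_rel_def by simp
      moreover have "(k,j) \<in> adj_rel n w1" using that mg1 unfolding adj_rel_def multigraph_def by simp
      ultimately show ?thesis unfolding C_def mem_Collect_eq by (meson rtrancl_into_rtrancl)
    qed
    have A1: "(\<Sum>k<n. real (w1 j k) * \<phi> k) = m1 j * \<phi> j" if j: "j < n" for j
    proof -
      have "(\<Sum>k<n. real (w1 j k) * \<phi> k) = (\<Sum>k<n. real (w1 j k) * \<phi> j)"
      proof (rule sum.cong[OF refl])
        fix k assume k: "k \<in> {..<n}"
        show "real (w1 j k) * \<phi> k = real (w1 j k) * \<phi> j"
        proof (cases "w1 j k = 0")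
          case False
          hence "(j \<in> C) = (k \<in> C)" using closed[OF j _] k by simp
          thus ?thesis unfolding \<phi>_def by simp
        qed simp
      qed
      also have "\<dots> = m1 j * \<phi> j" unfolding m1_def degree_def by (simp add: sum_distrib_right)
      finally show ?thesis .
    qed
    have "(\<Sum>j<n. \<Sum>k<n. real (w1 j k) * \<phi> j * \<phi> k) = (\<Sum>j<n. \<phi> j * (\<Sum>k<n. real (w1 j k) * \<phi> k))"
      by (simp add: sum_distrib_left algebra_simps)
    also have "\<dots> = (\<Sum>j<n. m1 j * (\<phi> j)^2)"
      by (rule sum.cong, auto simp: A1 power2_eq_square)
    finally have QM: "(\<Sum>j<n. \<Sum>k<n. real (w1 j k) * \<phi> j * \<phi> k) = (\<Sum>j<n. m1 j * (\<phi> j)^2)" .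
    have M1pos: "(\<Sum>j<n. m1 j * (\<phi> j)^2) > 0"
    proof -
      have "m1 u0 * (\<phi> u0)^2 > 0" using m1pos[OF u0(1)] pu0 by simp
      moreover have "m1 u0 * (\<phi> u0)^2 \<le> (\<Sum>j<n. m1 j * (\<phi> j)^2)"
        by (rule member_le_sum, insert u0(1) m1pos, auto simp: less_imp_le)
      ultimately show ?thesis by simp
    qed
    from key1[OF phi0 u0(1) pu0] QM have "(\<Sum>j<n. m1 j * (\<phi> j)^2) < (lam + 4 * eps) * (\<Sum>j<n. m1 j * (\<phi> j)^2)"
      by simp
    moreover have "(lam + 4 * eps) * (\<Sum>j<n. m1 j * (\<phi> j)^2) < (\<Sum>j<n. m1 j * (\<phi> j)^2)"
      using c1 M1pos by simp
    ultimately show False by simp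
  qed
  have eig: "second_eigenvalue n w1 < lam + 4 * eps"
  proof -
    note wsp = walk_spec[OF mg1 pos1]
    have srt: "\<forall>i j. i \<le> j \<longrightarrow> j < n \<longrightarrow> walk_eigenvalues n w1 ! j \<le> walk_eigenvalues n w1 ! i" using wsp by blast
    from conjunct2[OF conjunct2[OF wsp]] obtain P where
      Ps: "(\<forall>i<n. \<forall>j<n. (\<Sum>k<n. P $$ (k,i) * P $$ (k,j)) = (if i = j then 1 else 0))"
          "(\<forall>i<n. \<forall>j<n. (\<Sum>k<n. P $$ (i,k) * P $$ (j,k)) = (if i = j then 1 else 0))"
          "(\<forall>i<n. \<forall>j<n. (\<Sum>k<n. Smat n w1 $$ (i,k) * P $$ (k,j)) = walk_eigenvalues n w1 ! j * P $$ (i,j))"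
      by blast
    interpret sp: spec n "\<lambda>i k. Smat n w1 $$ (i,k)" "\<lambda>i k. P $$ (i,k)" "walk_eigenvalues n w1"
      by (unfold_locales, insert Ps, blast+)
    have "walk_eigenvalues n w1 ! 1 < lam + 4 * eps"
    proof (rule sp.g1side[OF n1, of "\<lambda>j. m j / sqrt (m1 j)"])
      show "\<And>i j. i \<le> j \<Longrightarrow> j < n \<Longrightarrow> walk_eigenvalues n w1 ! j \<le> walk_eigenvalues n w1 ! i"
        using srt by blast
      fix x assume xt: "(\<Sum>j<n. x j * (m j / sqrt (m1 j))) = 0" and xnz: "\<exists>j<n. x j \<noteq> 0"
      define \<phi> where "\<phi> = (\<lambda>j. x j / sqrt (m1 j))"
      have xphi: "x j = sqrt (m1 j) * \<phi> j" if "j < n" for j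
        using m1pos[OF that] unfolding \<phi>_def by simp
      have "(\<Sum>v<n. m v * \<phi> v) = (\<Sum>j<n. x j * (m j / sqrt (m1 j)))"
        unfolding \<phi>_def by (rule sum.cong, auto)
      hence phi0: "(\<Sum>v<n. m v * \<phi> v) = 0" using xt by simp
      from xnz obtain v1 where v1: "v1 < n" "x v1 \<noteq> 0" by blast
      hence pv1: "\<phi> v1 \<noteq> 0" using xphi[OF v1(1)] by auto
      have "(\<Sum>j<n. x j * (\<Sum>k<n. Smat n w1 $$ (j,k) * x k))
          = (\<Sum>j<n. (sqrt (m1 j) * \<phi> j) * (\<Sum>k<n. Smat n w1 $$ (j,k) * (sqrt (m1 k) * \<phi> k)))"
      proof (rule sum.cong[OF refl])
        fix j assume j: "j \<in> {..<n}"
        have "(\<Sum>k<n. Smat n w1 $$ (j,k) * x k) = (\<Sum>k<n. Smat n w1 $$ (j,k) * (sqrt (m1 k) * \<phi> k))"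
          by (rule sum.cong, auto simp: xphi)
        thus "x j * (\<Sum>k<n. Smat n w1 $$ (j,k) * x k) = (sqrt (m1 j) * \<phi> j) * (\<Sum>k<n. Smat n w1 $$ (j,k) * (sqrt (m1 k) * \<phi> k))"
          using xphi j by simp
      qed
      also have "\<dots> = (\<Sum>j<n. \<Sum>k<n. real (w1 j k) * \<phi> j * \<phi> k)"
        using quad_tr[OF pos1, of \<phi>] unfolding m1_def .
      also have "\<dots> < (lam + 4 * eps) * (\<Sum>j<n. m1 j * (\<phi> j)^2)"
        by (rule key1[OF phi0 v1(1) pv1])
      also have "(\<Sum>j<n. m1 j * (\<phi> j)^2) = (\<Sum>j<n. (x j)^2)"
      proof -
        have "(\<Sum>j<n. (x j)^2) = (\<Sum>j<n. (sqrt (m1 j) * \<phi> j)^2)"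
          by (rule sum.cong, auto simp: xphi)
        also have "\<dots> = (\<Sum>j<n. m1 j * (\<phi> j)^2)"
          using norm_tr[OF pos1, of \<phi>] unfolding m1_def .
        finally show ?thesis by simp
      qed
      finally show "(\<Sum>j<n. x j * (\<Sum>k<n. Smat n w1 $$ (j,k) * x k)) < (lam + 4 * eps) * (\<Sum>j<n. (x j)^2)" .
    qed
    thus ?thesis unfolding second_eigenvalue_def .
  qed
  show ?thesis using conn eig by simp
qed

end
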